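(* Let $X$ be a Banach space isomorphic to a Hilbert space and let $A$ be the generator of a uniformly exponentially stable $C_0$-semigroup $\mathbf T=\{T(t)\}_{t\ge0}$ on $X$. Then the following are equivalent: (1) $\mathbf T$ is left-invertible; (2) every element of $L_A$ is strongly positive.
   Context: $X^{*}$ denotes the space of all bounded antilinear functionals on $X$, and $\langle f,x\rangle$ the duality pairing of $f\in X^{*}$ with $x\in X$. $B(X,X^{*})$ is the space of bounded linear operators $X\to X^{*}$. $Q\in B(X,X^{*})$ is positive if $\langle Qx,x\rangle\ge0$ for all $x$, and strongly positive if there is $\theta>0$ with $\langle Qx,x\rangle\ge\theta\|x\|^{2}$ for all $x\in X$; $B^{+}(X,X^{*})$ is the set of positive operators. $L_A$ is the set of all $Q\in B^{+}(X,X^{*})$ with $\langle QAx,x\rangle+\langle Qx,Ax\rangle\le -\|x\|^{2}$ for all $x\in D(A)$. The semigroup $\mathbf T$ is left-invertible if there is a function $t\mapsto m(t)>0$ such that $\|T(t)x\|\ge m(t)\|x\|$ for all $x\in X$ and all $t\ge0$. Uniform exponential stability means $\|T(t)\|\le Me^{-\varepsilon t}$ for some $M\ge1,\varepsilon>0$ and all $t\ge0$. *)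

theory Defs
  imports "HOL-Analysis.Analysis"
begin

text \<open>A complex Banach space is modelled as a real Banach space (type class banach)
  together with a complex scalar multiplication cs extending the real one.\<close>

definition complex_structure :: "(complex \<Rightarrow> 'a::real_normed_vector \<Rightarrow> 'a) \<Rightarrow> bool" where
  "complex_structure cs \<longleftrightarrow>
     (\<forall>r x. cs (complex_of_real r) x = r *\<^sub>R x) \<and>
     (\<forall>a b x. cs a (cs b x) = cs (a * b) x) \<and>
     (\<forall>a x y. cs a (x + y) = cs a x + cs a y) \<and>
     (\<forall>a b x. cs (a + b) x = cs a x + cs b x) \<and>
     (\<forall>a x. norm (cs a x) = cmod a * norm x)"

text \<open>X is isomorphic to a Hilbert space: there is an inner product (linear in the first,
  antilinear in the second argument, Hermitian) whose norm is equivalent to the given norm.\<close>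
definition hilbertian :: "(complex \<Rightarrow> 'a::real_normed_vector \<Rightarrow> 'a) \<Rightarrow> bool" where
  "hilbertian cs \<longleftrightarrow> (\<exists>ip :: 'a \<Rightarrow> 'a \<Rightarrow> complex.
     (\<forall>x y z. ip (x + y) z = ip x z + ip y z) \<and>
     (\<forall>c x z. ip (cs c x) z = c * ip x z) \<and>
     (\<forall>x y. ip y x = cnj (ip x y)) \<and>
     (\<exists>c C. c > 0 \<and> (\<forall>x. Im (ip x x) = 0 \<and> c * (norm x)\<^sup>2 \<le> Re (ip x x)
                                 \<and> Re (ip x x) \<le> C * (norm x)\<^sup>2)))"

definition bounded_clinear_op :: "(complex \<Rightarrow> 'a::real_normed_vector \<Rightarrow> 'a) \<Rightarrow> ('a \<Rightarrow> 'a) \<Rightarrow> bool" where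
  "bounded_clinear_op cs L \<longleftrightarrow>
     (\<forall>x y. L (x + y) = L x + L y) \<and> (\<forall>c x. L (cs c x) = cs c (L x)) \<and>
     (\<exists>K. \<forall>x. norm (L x) \<le> K * norm x)"

text \<open>Bounded antilinear functionals, i.e. elements of X*.\<close>
definition bounded_antilinear_functional ::
    "(complex \<Rightarrow> 'a::real_normed_vector \<Rightarrow> 'a) \<Rightarrow> ('a \<Rightarrow> complex) \<Rightarrow> bool" where
  "bounded_antilinear_functional cs f \<longleftrightarrow>
     (\<forall>x y. f (x + y) = f x + f y) \<and> (\<forall>c x. f (cs c x) = cnj c * f x) \<and>
     (\<exists>K. \<forall>x. cmod (f x) \<le> K * norm x)"

text \<open>Q \<in> B(X,X*): Q x is the functional with \<langle>Qx,y\<rangle> = Q x y.\<close>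
definition bounded_op_dual :: "(complex \<Rightarrow> 'a::real_normed_vector \<Rightarrow> 'a) \<Rightarrow> ('a \<Rightarrow> 'a \<Rightarrow> complex) \<Rightarrow> bool" where
  "bounded_op_dual cs Q \<longleftrightarrow>
     (\<forall>x. bounded_antilinear_functional cs (Q x)) \<and>
     (\<forall>x y. Q (x + y) = (\<lambda>z. Q x z + Q y z)) \<and>
     (\<forall>c x. Q (cs c x) = (\<lambda>z. c * Q x z)) \<and>
     (\<exists>M. \<forall>x z. cmod (Q x z) \<le> M * norm x * norm z)"

definition positive_op :: "(complex \<Rightarrow> 'a::real_normed_vector \<Rightarrow> 'a) \<Rightarrow> ('a \<Rightarrow> 'a \<Rightarrow> complex) \<Rightarrow> bool" where
  "positive_op cs Q \<longleftrightarrow> bounded_op_dual cs Q \<and> (\<forall>x. Im (Q x x) = 0 \<and> Re (Q x x) \<ge> 0)"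

definition strongly_positive :: "('a::real_normed_vector \<Rightarrow> 'a \<Rightarrow> complex) \<Rightarrow> bool" where
  "strongly_positive Q \<longleftrightarrow> (\<exists>\<theta>>0. \<forall>x. Im (Q x x) = 0 \<and> Re (Q x x) \<ge> \<theta> * (norm x)\<^sup>2)"

definition C0_semigroup :: "(complex \<Rightarrow> 'a::real_normed_vector \<Rightarrow> 'a) \<Rightarrow> (real \<Rightarrow> 'a \<Rightarrow> 'a) \<Rightarrow> bool" where
  "C0_semigroup cs T \<longleftrightarrow>
     (\<forall>t\<ge>0. bounded_clinear_op cs (T t)) \<and> T 0 = id \<and>
     (\<forall>t s. t \<ge> 0 \<longrightarrow> s \<ge> 0 \<longrightarrow> T (t + s) = T t \<circ> T s) \<and>
     (\<forall>x. ((\<lambda>t. T t x) \<longlongrightarrow> x) (at_right 0))"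

definition generator :: "(real \<Rightarrow> 'a::real_normed_vector \<Rightarrow> 'a) \<Rightarrow> 'a set \<Rightarrow> ('a \<Rightarrow> 'a) \<Rightarrow> bool" where
  "generator T D A \<longleftrightarrow>
     D = {x. \<exists>y. ((\<lambda>h. (1 / h) *\<^sub>R (T h x - x)) \<longlongrightarrow> y) (at_right 0)} \<and>
     (\<forall>x\<in>D. ((\<lambda>h. (1 / h) *\<^sub>R (T h x - x)) \<longlongrightarrow> A x) (at_right 0))"

definition unif_exp_stable :: "(real \<Rightarrow> 'a::real_normed_vector \<Rightarrow> 'a) \<Rightarrow> bool" where
  "unif_exp_stable T \<longleftrightarrow> (\<exists>M \<epsilon>. M \<ge> 1 \<and> \<epsilon> > 0 \<and> (\<forall>t\<ge>0. onorm (T t) \<le> M * exp (- \<epsilon> * t)))"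

definition left_invertible_sg :: "(real \<Rightarrow> 'a::real_normed_vector \<Rightarrow> 'a) \<Rightarrow> bool" where
  "left_invertible_sg T \<longleftrightarrow> (\<exists>m :: real \<Rightarrow> real. (\<forall>t\<ge>0. m t > 0) \<and>
     (\<forall>t\<ge>0. \<forall>x. norm (T t x) \<ge> m t * norm x))"

definition L_set :: "(complex \<Rightarrow> 'a::real_normed_vector \<Rightarrow> 'a) \<Rightarrow> 'a set \<Rightarrow> ('a \<Rightarrow> 'a)
    \<Rightarrow> ('a \<Rightarrow> 'a \<Rightarrow> complex) set" where
  "L_set cs D A = {Q. positive_op cs Q \<and>
     (\<forall>x\<in>D. Im (Q (A x) x + Q x (A x)) = 0 \<and> Re (Q (A x) x + Q x (A x)) \<le> - (norm x)\<^sup>2)}"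

end

theory Submission
  imports Defs
begin


lemma conv_vd:
  fixes F :: "real \<Rightarrow> 'b::real_normed_vector"
  assumes "(F has_vector_derivative L) (at t within S)" "{t..b} \<subseteq> S" "t < b"
  shows "((\<lambda>k. (1/k) *\<^sub>R (F (t+k) - F t)) \<longlongrightarrow> L) (at_right 0)"
proof -
  have "((\<lambda>y. (1/norm (y - t)) *\<^sub>R (F y - (F t + (y - t) *\<^sub>R L))) \<longlongrightarrow> 0) (at t within S)"
    using assms(1) unfolding has_vector_derivative_def has_derivative_within by blast
  then have "((\<lambda>y. (1/norm (y - t)) *\<^sub>R (F y - (F t + (y - t) *\<^sub>R L))) \<longlongrightarrow> 0) (at t within {t..b})"
    using assms(2) tendsto_within_subset by blast
  then have "((\<lambda>y. (1/norm (y - t)) *\<^sub>R (F y - (F t + (y - t) *\<^sub>R L))) \<longlongrightarrow> 0) (at_right t)"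
    using at_within_Icc_at_right[OF assms(3)] by simp
  then have "((\<lambda>k. (1/norm k) *\<^sub>R (F (k+t) - (F t + k *\<^sub>R L))) \<longlongrightarrow> 0) (at_right 0)"
    unfolding filterlim_at_right_to_0[of _ _ t] by simp
  then have *: "((\<lambda>k. (1/norm k) *\<^sub>R (F (k+t) - (F t + k *\<^sub>R L)) + L) \<longlongrightarrow> 0 + L) (at_right 0)"
    by (intro tendsto_add) auto
  have "eventually (\<lambda>k. (1/norm k) *\<^sub>R (F (k+t) - (F t + k *\<^sub>R L)) + L = (1/k) *\<^sub>R (F (t+k) - F t)) (at_right 0)"
  proof (rule eventually_mono[OF eventually_at_right_less])
    fix k :: real assume "0 < k"
    then show "(1/norm k) *\<^sub>R (F (k+t) - (F t + k *\<^sub>R L)) + L = (1/k) *\<^sub>R (F (t+k) - F t)"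
      by (simp add: algebra_simps scaleR_diff_right add.commute)
  qed
  with * show ?thesis by (simp add: tendsto_cong)
qed

lemma dq_integral:
  fixes f :: "real \<Rightarrow> 'b::banach"
  assumes "continuous_on {0..} f" "t \<ge> 0"
  shows "((\<lambda>k. (1/k) *\<^sub>R (integral {0..t+k} f - integral {0..t} f)) \<longlongrightarrow> f t) (at_right 0)"
proof -
  have "continuous_on {0..t+1} f" using assms(1) by (rule continuous_on_subset) auto
  then have "((\<lambda>u. integral {0..u} f) has_vector_derivative f t) (at t within {0..t+1})"
    using assms(2) by (intro integral_has_vector_derivative) auto
  from conv_vd[OF this, of "t+1"] show ?thesis using assms(2) by auto
qed

lemma dini:
  fixes g :: "real \<Rightarrow> real"
  assumes ab: "a \<le> b" and cont: "continuous_on {a..b} g"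
    and der: "\<And>t. a \<le> t \<Longrightarrow> t < b \<Longrightarrow> \<exists>L\<le>0. ((\<lambda>h. (g (t+h) - g t)/h) \<longlongrightarrow> L) (at_right 0)"
  shows "g b \<le> g a"
proof -
  have key: "g b \<le> g a + e*(b-a)" if e: "e > 0" for e
  proof -
    define S where "S = {a..b} \<inter> (\<lambda>t. g t - e*(t-a)) -` {..g a}"
    have "continuous_on {a..b} (\<lambda>t. g t - e*(t-a))"
      by (intro continuous_intros cont)
    then have clS: "closed S" unfolding S_def
      by (intro continuous_closed_preimage) auto
    have aS: "a \<in> S" using ab by (auto simp: S_def)
    have bdd: "bdd_above S" by (auto simp: S_def bdd_above_def)
    define s where "s = Sup S"
    have sS: "s \<in> S" unfolding s_def using aS bdd clS by (intro closed_contains_Sup) auto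
    then have sab: "a \<le> s" "s \<le> b" and gs: "g s \<le> g a + e*(s-a)" by (auto simp: S_def)
    have "s = b"
    proof (rule ccontr)
      assume "s \<noteq> b" with sab have sb: "s < b" by auto
      obtain L where L: "L \<le> 0" "((\<lambda>h. (g (s+h) - g s)/h) \<longlongrightarrow> L) (at_right 0)"
        using der[OF sab(1) sb] by blast
      have "eventually (\<lambda>h. (g (s+h) - g s)/h < e) (at_right 0)"
        using order_tendstoD(2)[OF L(2)] L(1) e by auto
      moreover have "eventually (\<lambda>h. h \<in> {0<..<b-s}) (at_right (0::real))"
        using sb by (intro eventually_at_right_real) auto
      ultimately have "eventually (\<lambda>h. (g (s+h) - g s)/h < e \<and> h \<in> {0<..<b-s}) (at_right (0::real))"
        by (rule eventually_conj)
      then obtain h where h: "(g (s+h) - g s)/h < e" "0 < h" "h < b - s"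
        using eventually_happens' [OF trivial_limit_at_right_real] by force
      then have "g (s+h) - g s < e*h" by (simp add: divide_less_eq)
      with gs have "g (s+h) - e*((s+h)-a) \<le> g a" by (simp add: algebra_simps)
      then have "s + h \<in> S" using h sab by (auto simp: S_def)
      then have "s + h \<le> s" unfolding s_def using bdd by (rule cSup_upper)
      with h show False by auto
    qed
    with gs show ?thesis by simp
  qed
  show ?thesis
  proof (rule ccontr)
    assume "\<not> g b \<le> g a"
    then have pos: "g b - g a > 0" by auto
    define e where "e = (g b - g a)/(b - a + 1)"
    have e: "e > 0" using pos ab by (simp add: e_def)
    have "e*(b-a) < e*(b-a+1)" using e by simp
    also have "\<dots> = g b - g a" using ab by (simp add: e_def)
    finally show False using key[OF e] by simp
  qed
qed

lemma sesq_bilinear: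
  fixes B :: "'a::real_normed_vector \<Rightarrow> 'a \<Rightarrow> complex"
  assumes "\<And>x y z. B (x+y) z = B x z + B y z" "\<And>x y z. B x (y+z) = B x y + B x z"
   "\<And>r x z. B (r *\<^sub>R x) z = r *\<^sub>R B x z" "\<And>r x z. B x (r *\<^sub>R z) = r *\<^sub>R B x z"
   "\<And>x z. norm (B x z) \<le> K * norm x * norm z"
  shows "bounded_bilinear B"
proof
  show "\<exists>K. \<forall>a b. norm (B a b) \<le> norm a * norm b * K"
    using assms(5) by (metis mult.commute mult.left_commute)
qed (use assms in auto)

lemma cs_real: "complex_structure cs \<Longrightarrow> cs (complex_of_real r) x = r *\<^sub>R x"
  unfolding complex_structure_def by blast

lemma bod_bilinear:
  assumes cs: "complex_structure cs" and Q: "bounded_op_dual cs Q"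
  shows "bounded_bilinear Q"
proof -
  from Q obtain K where K: "\<And>x z. cmod (Q x z) \<le> K * norm x * norm z"
    unfolding bounded_op_dual_def by blast
  have add1: "Q (x+y) z = Q x z + Q y z" for x y z
    using Q unfolding bounded_op_dual_def by metis
  have add2: "Q x (y+z) = Q x y + Q x z" for x y z
    using Q unfolding bounded_op_dual_def bounded_antilinear_functional_def by blast
  have sc1: "Q (r *\<^sub>R x) z = r *\<^sub>R Q x z" for r x z
  proof -
    have "Q (cs (complex_of_real r) x) = (\<lambda>z. complex_of_real r * Q x z)"
      using Q unfolding bounded_op_dual_def by blast
    then show ?thesis using cs_real[OF cs] by (simp add: scaleR_conv_of_real)
  qed
  have sc2: "Q x (r *\<^sub>R z) = r *\<^sub>R Q x z" for r x z
  proof -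
    have "Q x (cs (complex_of_real r) z) = cnj (complex_of_real r) * Q x z"
      using Q unfolding bounded_op_dual_def bounded_antilinear_functional_def by blast
    then show ?thesis using cs_real[OF cs] by (simp add: scaleR_conv_of_real)
  qed
  show ?thesis by (rule sesq_bilinear[OF add1 add2 sc1 sc2 K])
qed

lemma tail_lim:
  fixes f :: "real \<Rightarrow> complex"
  assumes f: "f absolutely_integrable_on {0..}"
  shows "((\<lambda>b. integral {0..b} f) \<longlongrightarrow> integral {0..} f) at_top"
proof -
  have 1: "((\<lambda>b. set_lebesgue_integral lebesgue {0..b} f) \<longlongrightarrow> set_lebesgue_integral lebesgue {0..} f) at_top"
    by (rule tendsto_set_lebesgue_integral_at_top) (use f in auto)
  have "set_lebesgue_integral lebesgue {0..b} f = integral {0..b} f" for b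
  proof -
    have "set_integrable lebesgue {0..b} f" by (rule set_integrable_subset[OF f]) auto
    then show ?thesis by (rule set_lebesgue_integral_eq_integral(2))
  qed
  with 1 set_lebesgue_integral_eq_integral(2)[OF f] show ?thesis by simp
qed

lemma ip_bilinear:
  fixes ip :: "'a::real_normed_vector \<Rightarrow> 'a \<Rightarrow> complex"
  assumes cs: "complex_structure cs"
    and a1: "\<And>x y z. ip (x+y) z = ip x z + ip y z"
    and a2: "\<And>c x z. ip (cs c x) z = c * ip x z"
    and a3: "\<And>x y. ip y x = cnj (ip x y)"
    and a4: "\<And>x. Re (ip x x) \<le> C * (norm x)\<^sup>2" and C: "C \<ge> 0"
    and a5: "\<And>x. Re (ip x x) \<ge> 0"
  shows "bounded_bilinear ip"
proof -
  have b1: "ip x (y+z) = ip x y + ip x z" for x y z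
  proof -
    have "ip x (y+z) = cnj (ip (y+z) x)" using a3[of "y+z" x] by simp
    also have "\<dots> = cnj (ip y x) + cnj (ip z x)" using a1[of y z x] by simp
    also have "\<dots> = ip x y + ip x z" using a3[of y x] a3[of z x] by simp
    finally show ?thesis .
  qed
  have s1: "ip (r *\<^sub>R x) z = r *\<^sub>R ip x z" for r x z
    using a2[of "complex_of_real r" x z] cs_real[OF cs] by (simp add: scaleR_conv_of_real)
  have s2: "ip x (r *\<^sub>R z) = r *\<^sub>R ip x z" for r x z
    using a3[of x "r *\<^sub>R z"] s1[of r z x] a3[of x z] by (simp add: scaleR_conv_of_real)
  have neg: "ip (- x) z = - ip x z" for x z using s1[of "-1" x z] by simp
  have neg2: "ip z (- x) = - ip z x" for x z using s2[of z "-1" x] by simp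
  have cnjre: "Re (ip y x) = Re (ip x y)" for x y using a3[of x y] by simp
  have re_bd: "\<bar>Re (ip x y)\<bar> \<le> C * (norm x + norm y)\<^sup>2 / 4" for x y
  proof -
    have e1: "Re (ip (x+y) (x+y)) = Re (ip x x) + Re (ip y y) + 2 * Re (ip x y)"
      using a1 b1 cnjre[of x y] by simp
    have e2: "Re (ip (x-y) (x-y)) = Re (ip x x) + Re (ip y y) - 2 * Re (ip x y)"
    proof -
      have "ip (x - y) (x - y) = ip (x + -y) (x + -y)" by simp
      also have "\<dots> = ip x (x + -y) + ip (-y) (x + -y)" by (rule a1)
      also have "\<dots> = ip x x + ip x (-y) + (ip (-y) x + ip (-y) (-y))" by (simp only: b1)
      also have "\<dots> = ip x x - ip x y - ip y x + ip y y" by (simp only: neg neg2) simp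
      finally have "ip (x - y) (x - y) = ip x x - ip x y - ip y x + ip y y" .
      then show ?thesis using cnjre[of x y] by simp
    qed
    have n1: "(norm (x+y))\<^sup>2 \<le> (norm x + norm y)\<^sup>2"
      by (rule power_mono[OF norm_triangle_ineq]) simp
    have n2: "(norm (x-y))\<^sup>2 \<le> (norm x + norm y)\<^sup>2"
      by (rule power_mono[OF norm_triangle_ineq4]) simp
    have p1: "Re (ip (x+y) (x+y)) \<le> C * (norm x + norm y)\<^sup>2"
      using a4[of "x+y"] mult_left_mono[OF n1 C] by linarith
    have p2: "Re (ip (x-y) (x-y)) \<le> C * (norm x + norm y)\<^sup>2"
      using a4[of "x-y"] mult_left_mono[OF n2 C] by linarith
    have "4 * Re (ip x y) = Re (ip (x+y) (x+y)) - Re (ip (x-y) (x-y))" using e1 e2 by simp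
    moreover have "Re (ip (x+y) (x+y)) \<ge> 0" "Re (ip (x-y) (x-y)) \<ge> 0" using a5 by auto
    ultimately show ?thesis using p1 p2 by (simp add: abs_le_iff)
  qed
  have re_bd2: "\<bar>Re (ip x y)\<bar> \<le> C * norm x * norm y" for x y
  proof (cases "x = 0 \<or> y = 0")
    case True
    then show ?thesis using s1[of 0 x y] s2[of x 0 y] by auto
  next
    case False
    then have nx: "norm x > 0" and ny: "norm y > 0" by auto
    define u where "u = (1 / norm x) *\<^sub>R x"
    define v where "v = (1 / norm y) *\<^sub>R y"
    have "norm u = 1" "norm v = 1" using nx ny by (simp_all add: u_def v_def)
    then have "\<bar>Re (ip u v)\<bar> \<le> C" using re_bd[of u v] by simp
    moreover have "Re (ip u v) = Re (ip x y) / (norm x * norm y)"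
      unfolding u_def v_def s1 s2 by simp
    ultimately have "\<bar>Re (ip x y)\<bar> / (norm x * norm y) \<le> C" by (simp add: abs_div)
    then show ?thesis using nx ny by (simp add: divide_le_eq mult.assoc)
  qed
  have im: "Im (ip x y) = Re (ip x (cs \<i> y))" for x y
    using a3[of x "cs \<i> y"] a2[of \<i> y x] a3[of x y] by simp
  have ni: "norm (cs \<i> y) = norm y" for y
  proof -
    have "norm (cs \<i> y) = cmod \<i> * norm y" using cs unfolding complex_structure_def by blast
    then show ?thesis by simp
  qed
  have bd: "norm (ip x y) \<le> (2 * C) * norm x * norm y" for x y
  proof -
    have "norm (ip x y) \<le> \<bar>Re (ip x y)\<bar> + \<bar>Im (ip x y)\<bar>" by (rule cmod_le)
    also have "\<dots> \<le> C * norm x * norm y + C * norm x * norm y"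
      using re_bd2[of x y] re_bd2[of x "cs \<i> y"] im[of x y] ni[of y] by simp
    finally show ?thesis by simp
  qed
  show ?thesis by (rule sesq_bilinear[OF a1 b1 s1 s2 bd])
qed



locale sgl =
  fixes cs :: "complex \<Rightarrow> 'a::banach \<Rightarrow> 'a"
    and T :: "real \<Rightarrow> 'a \<Rightarrow> 'a" and D :: "'a set" and A :: "'a \<Rightarrow> 'a"
    and M \<epsilon> :: real
  assumes cs: "complex_structure cs"
    and sg: "C0_semigroup cs T"
    and gen: "generator T D A"
    and M: "M \<ge> 1" and eps: "\<epsilon> > 0"
    and onb: "\<And>t. t \<ge> 0 \<Longrightarrow> onorm (T t) \<le> M * exp (- \<epsilon> * t)"
begin

lemma T_lin: assumes "t \<ge> 0" shows "bounded_linear (T t)"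
proof -
  have "bounded_clinear_op cs (T t)" using sg assms unfolding C0_semigroup_def by blast
  then obtain K where add: "\<And>x y. T t (x + y) = T t x + T t y"
    and c: "\<And>c x. T t (cs c x) = cs c (T t x)" and K: "\<And>x. norm (T t x) \<le> K * norm x"
    unfolding bounded_clinear_op_def by blast
  show ?thesis
  proof (rule bounded_linear_intro[where K=K])
    show "T t (r *\<^sub>R x) = r *\<^sub>R T t x" for r x
      using c[of "complex_of_real r" x] cs_real[OF cs] by simp
  qed (use add K in \<open>auto simp: mult.commute\<close>)
qed

lemma T_cs: "t \<ge> 0 \<Longrightarrow> T t (cs c x) = cs c (T t x)"
  using sg unfolding C0_semigroup_def bounded_clinear_op_def by blast

lemma T_bound: assumes "t \<ge> 0" shows "norm (T t x) \<le> M * exp (- \<epsilon> * t) * norm x"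
proof -
  have "norm (T t x) \<le> onorm (T t) * norm x" by (rule onorm[OF T_lin[OF assms]])
  also have "\<dots> \<le> M * exp (- \<epsilon> * t) * norm x" using onb[OF assms] by (simp add: mult_right_mono)
  finally show ?thesis .
qed

lemma T_bound1: assumes "t \<ge> 0" shows "norm (T t x) \<le> M * norm x"
proof -
  have "exp (- \<epsilon> * t) \<le> 1" using eps assms by simp
  then have "M * exp (- \<epsilon> * t) * norm x \<le> M * 1 * norm x" using M
    by (intro mult_right_mono mult_left_mono) auto
  then show ?thesis using T_bound[OF assms, of x] by simp
qed

lemma T0: "T 0 x = x" using sg unfolding C0_semigroup_def by simp

lemma T_add: "t \<ge> 0 \<Longrightarrow> s \<ge> 0 \<Longrightarrow> T (t + s) x = T t (T s x)"
  using sg unfolding C0_semigroup_def by (metis comp_apply)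

lemma T_right: "((\<lambda>t. T t x) \<longlongrightarrow> x) (at_right 0)"
  using sg unfolding C0_semigroup_def by blast

lemma T_diff: assumes "s \<ge> 0" "t \<ge> 0" shows "norm (T s x - T t x) \<le> M * norm (T \<bar>s - t\<bar> x - x)"
proof (cases "s \<le> t")
  case True
  have "T t x = T s (T (t - s) x)" using T_add[of s "t-s" x] True assms by simp
  then have "T s x - T t x = T s (x - T (t-s) x)" using linear_diff[OF bounded_linear.linear[OF T_lin[OF assms(1)]]] by simp
  then have "norm (T s x - T t x) \<le> M * norm (x - T (t-s) x)" using T_bound1[OF assms(1)] by simp
  then show ?thesis using True by (simp add: norm_minus_commute)
next
  case False
  have "T s x = T t (T (s - t) x)" using T_add[of t "s-t" x] False assms by simp
  then have "T s x - T t x = T t (T (s-t) x - x)" using linear_diff[OF bounded_linear.linear[OF T_lin[OF assms(2)]]] by simp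
  then have "norm (T s x - T t x) \<le> M * norm (T (s-t) x - x)" using T_bound1[OF assms(2)] by simp
  then show ?thesis using False by simp
qed

lemma T_cont: "continuous_on {0..} (\<lambda>t. T t x)"
  unfolding continuous_on_iff
proof (intro ballI allI impI)
  fix t e :: real assume t: "t \<in> {0..}" and e: "e > 0"
  have "eventually (\<lambda>h. dist (T h x) x < e / M) (at_right 0)"
    using tendstoD[OF T_right] e M by simp
  then obtain d where d: "d > 0" and dd: "\<And>h. 0 < h \<Longrightarrow> h < d \<Longrightarrow> dist (T h x) x < e / M"
    unfolding eventually_at_right_field by (auto simp: dist_real_def)
  show "\<exists>d>0. \<forall>s\<in>{0..}. dist s t < d \<longrightarrow> dist (T s x) (T t x) < e"
  proof (intro exI[of _ d] conjI ballI impI d)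
    fix s assume s: "s \<in> {0..}" "dist s t < d"
    show "dist (T s x) (T t x) < e"
    proof (cases "s = t")
      case True then show ?thesis using e by simp
    next
      case False
      then have "dist (T \<bar>s - t\<bar> x) x < e / M" using s by (intro dd) (auto simp: dist_real_def)
      then have "M * norm (T \<bar>s - t\<bar> x - x) < M * (e / M)" using M
        by (intro mult_strict_left_mono) (auto simp: dist_norm)
      also have "\<dots> = e" using M by simp
      finally show ?thesis using T_diff[of s t x] s t by (simp add: dist_norm)
    qed
  qed
qed


lemma gen_lim: "x \<in> D \<Longrightarrow> ((\<lambda>h. (1/h) *\<^sub>R (T h x - x)) \<longlongrightarrow> A x) (at_right 0)"
  using gen unfolding generator_def by blast

lemma D_inv: assumes x: "x \<in> D" and t: "t \<ge> 0" shows "T t x \<in> D"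
proof -
  have "((\<lambda>h. T t ((1/h) *\<^sub>R (T h x - x))) \<longlongrightarrow> T t (A x)) (at_right 0)"
    by (rule bounded_linear.tendsto[OF T_lin[OF t] gen_lim[OF x]])
  moreover have "eventually (\<lambda>h. T t ((1/h) *\<^sub>R (T h x - x)) = (1/h) *\<^sub>R (T h (T t x) - T t x)) (at_right 0)"
  proof (rule eventually_mono[OF eventually_at_right_less])
    fix h :: real assume h: "0 < h"
    have "T h (T t x) = T t (T h x)" using T_add[of h t x] T_add[of t h x] h t by (simp add: add.commute)
    then show "T t ((1/h) *\<^sub>R (T h x - x)) = (1/h) *\<^sub>R (T h (T t x) - T t x)"
      using T_lin[OF t] by (simp add: linear_simps)
  qed
  ultimately have "((\<lambda>h. (1/h) *\<^sub>R (T h (T t x) - T t x)) \<longlongrightarrow> T t (A x)) (at_right 0)"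
    by (simp add: tendsto_cong)
  then show ?thesis using gen unfolding generator_def by blast
qed

lemma RD:
  assumes B: "bounded_bilinear B" and y: "y \<in> D"
  shows "((\<lambda>h. (1/h) *\<^sub>R (B (T h y) (T h y) - B y y)) \<longlongrightarrow> B (A y) y + B y (A y)) (at_right 0)"
proof -
  interpret B: bounded_bilinear B by (rule B)
  have "((\<lambda>h. B ((1/h) *\<^sub>R (T h y - y)) (T h y) + B y ((1/h) *\<^sub>R (T h y - y))) \<longlongrightarrow> B (A y) y + B y (A y)) (at_right 0)"
    by (intro tendsto_add B.tendsto gen_lim[OF y] T_right tendsto_const)
  moreover have "eventually (\<lambda>h. B ((1/h) *\<^sub>R (T h y - y)) (T h y) + B y ((1/h) *\<^sub>R (T h y - y))
      = (1/h) *\<^sub>R (B (T h y) (T h y) - B y y)) (at_right 0)"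
    by (rule always_eventually)
      (simp add: B.scaleR_left B.scaleR_right B.diff_left B.diff_right algebra_simps scaleR_diff_right)
  ultimately show ?thesis by (simp add: tendsto_cong)
qed


lemma T_int: "(\<lambda>s. T s x) integrable_on {a..b}" if "a \<ge> 0"
  using that by (intro integrable_continuous_real continuous_on_subset[OF T_cont]) auto

lemma D_dense: "x \<in> closure D"
proof -
  define f where "f = (\<lambda>s. T s x)"
  define F where "F = (\<lambda>u. integral {0..u} f)"
  have fc: "continuous_on {0..} f" unfolding f_def by (rule T_cont)
  have F0: "F 0 = 0" by (simp add: F_def)
  have TkF: "T k (F h) = F (k + h) - F k" if k: "k \<ge> 0" and h: "h \<ge> 0" for k h
  proof -
    have "T k (F h) = integral {0..h} (T k \<circ> f)"
      unfolding F_def f_def by (rule integral_linear[symmetric, OF T_int T_lin[OF k]]) simp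
    also have "\<dots> = integral {0..h} (\<lambda>s. f (s + k))"
      by (rule integral_cong) (use k in \<open>auto simp: f_def T_add[symmetric] add.commute\<close>)
    also have "\<dots> = integral {k..k+h} f"
    proof -
      have "(f has_integral integral {k..k+h} f) {k..k+h}" unfolding f_def using k
        by (intro integrable_integral T_int)
      from has_integral_shift_real_ivl[OF this, of k] show ?thesis by (simp add: integral_unique)
    qed
    also have "\<dots> = F (k + h) - F k"
      using Henstock_Kurzweil_Integration.integral_combine[where a=0 and c=k and b="k+h" and f=f] k h T_int[where a=0 and b="k+h" and x=x] by (simp add: F_def f_def eq_diff_eq add.commute)
    finally show ?thesis .
  qed
  have dq0: "((\<lambda>k. (1/k) *\<^sub>R (F k)) \<longlongrightarrow> x) (at_right 0)"
    using dq_integral[OF fc, of 0] by (simp add: F_def f_def T0)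
  have inD: "(1/h) *\<^sub>R F h \<in> D" if h: "h > 0" for h
  proof -
    have lh: "((\<lambda>k. (1/k) *\<^sub>R (F (h+k) - F h)) \<longlongrightarrow> f h) (at_right 0)"
      using dq_integral[OF fc, of h] h by (simp add: F_def)
    have "((\<lambda>k. (1/h) *\<^sub>R ((1/k) *\<^sub>R (F (h+k) - F h) - (1/k) *\<^sub>R (F k))) \<longlongrightarrow> (1/h) *\<^sub>R (f h - x)) (at_right 0)"
      by (intro tendsto_scaleR tendsto_const tendsto_diff lh dq0)
    moreover have "eventually (\<lambda>k. (1/h) *\<^sub>R ((1/k) *\<^sub>R (F (h+k) - F h) - (1/k) *\<^sub>R (F k))
         = (1/k) *\<^sub>R (T k ((1/h) *\<^sub>R F h) - (1/h) *\<^sub>R F h)) (at_right 0)"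
    proof (rule eventually_mono[OF eventually_at_right_less])
      fix k :: real assume k: "0 < k"
      have "T k ((1/h) *\<^sub>R F h) = (1/h) *\<^sub>R (F (k + h) - F k)"
        using TkF[of k h] k h T_lin[of k] by (simp add: linear_simps)
      then show "(1/h) *\<^sub>R ((1/k) *\<^sub>R (F (h+k) - F h) - (1/k) *\<^sub>R (F k))
         = (1/k) *\<^sub>R (T k ((1/h) *\<^sub>R F h) - (1/h) *\<^sub>R F h)"
        by (simp add: scaleR_diff_right scaleR_scaleR add.commute mult.commute)
    qed
    ultimately have "((\<lambda>k. (1/k) *\<^sub>R (T k ((1/h) *\<^sub>R F h) - (1/h) *\<^sub>R F h)) \<longlongrightarrow> (1/h) *\<^sub>R (f h - x)) (at_right 0)"
      by (simp add: tendsto_cong)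
    then show ?thesis using gen unfolding generator_def by blast
  qed
  show ?thesis
  proof (rule Lim_in_closed_set[OF closed_closure _ _ dq0])
    show "eventually (\<lambda>k. (1/k) *\<^sub>R F k \<in> closure D) (at_right 0)"
      by (rule eventually_mono[OF eventually_at_right_less]) (use inD closure_subset in blast)
  qed simp
qed


lemma li_imp_sp:
  assumes li: "left_invertible_sg T" and Q: "Q \<in> L_set cs D A"
  shows "strongly_positive Q"
proof -
  obtain m where mpos: "\<And>t. t \<ge> 0 \<Longrightarrow> m t > 0"
    and mb: "\<And>t x. t \<ge> 0 \<Longrightarrow> norm (T t x) \<ge> m t * norm x"
    using li unfolding left_invertible_sg_def by blast
  have pos: "positive_op cs Q" and LA: "\<And>x. x \<in> D \<Longrightarrow> Re (Q (A x) x + Q x (A x)) \<le> - (norm x)\<^sup>2"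
    using Q unfolding L_set_def by auto
  have Qim: "Im (Q x x) = 0" and Qre: "Re (Q x x) \<ge> 0" for x using pos unfolding positive_op_def by auto
  have B: "bounded_bilinear Q" using pos cs bod_bilinear unfolding positive_op_def by blast
  interpret B: bounded_bilinear Q by (rule B)
  define c0 where "c0 = (m 1 / M)\<^sup>2"
  have m1: "m 1 > 0" using mpos by simp
  have c0: "c0 > 0" using m1 M by (simp add: c0_def)
  have low: "c0 * (norm x)\<^sup>2 \<le> (norm (T t x))\<^sup>2" if t: "0 \<le> t" "t \<le> 1" for t x
  proof -
    have "m 1 * norm x \<le> norm (T 1 x)" by (rule mb) simp
    also have "T 1 x = T (1 - t) (T t x)" using T_add[of "1-t" t x] t by simp
    also have "norm \<dots> \<le> M * norm (T t x)" using t by (intro T_bound1) simp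
    finally have "(m 1 / M) * norm x \<le> norm (T t x)" using M by (simp add: field_simps)
    moreover have "0 \<le> (m 1 / M) * norm x" using m1 M by simp
    ultimately have "((m 1 / M) * norm x)\<^sup>2 \<le> (norm (T t x))\<^sup>2" by (rule power_mono)
    then show ?thesis by (simp add: c0_def power_mult_distrib power_divide)
  qed
  have onD: "c0 * (norm x)\<^sup>2 \<le> Re (Q x x)" if x: "x \<in> D" for x
  proof -
    define G where "G = (\<lambda>t. Re (Q (T t x) (T t x)) + c0 * (norm x)\<^sup>2 * t)"
    have "G 1 \<le> G 0"
    proof (rule dini[where g=G and a=0 and b=1])
      have "continuous_on {0..1} (\<lambda>t. T t x)" by (rule continuous_on_subset[OF T_cont]) auto
      then have "continuous_on {0..1} (\<lambda>t. Q (T t x) (T t x))" by (intro B.continuous_on)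
      then show "continuous_on {0..1} G" unfolding G_def
        by (intro continuous_intros)
    next
      fix t :: real assume t: "0 \<le> t" "t < 1"
      define y where "y = T t x"
      have y: "y \<in> D" unfolding y_def using D_inv x t by simp
      have "((\<lambda>h. Re ((1/h) *\<^sub>R (Q (T h y) (T h y) - Q y y)) + c0 * (norm x)\<^sup>2)
             \<longlongrightarrow> Re (Q (A y) y + Q y (A y)) + c0 * (norm x)\<^sup>2) (at_right 0)"
        by (intro tendsto_add tendsto_Re RD[OF B y] tendsto_const)
      moreover have "eventually (\<lambda>h. Re ((1/h) *\<^sub>R (Q (T h y) (T h y) - Q y y)) + c0 * (norm x)\<^sup>2
            = (G (t+h) - G t)/h) (at_right 0)"
      proof (rule eventually_mono[OF eventually_at_right_less])
        fix h :: real assume h: "0 < h"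
        have "T (t+h) x = T h y" unfolding y_def using T_add[of h t x] h t by (simp add: add.commute)
        then show "Re ((1/h) *\<^sub>R (Q (T h y) (T h y) - Q y y)) + c0 * (norm x)\<^sup>2 = (G (t+h) - G t)/h"
          using h by (simp add: G_def y_def field_simps)
      qed
      ultimately have lim: "((\<lambda>h. (G (t+h) - G t)/h) \<longlongrightarrow> Re (Q (A y) y + Q y (A y)) + c0 * (norm x)\<^sup>2) (at_right 0)"
        by (simp add: tendsto_cong)
      have "Re (Q (A y) y + Q y (A y)) + c0 * (norm x)\<^sup>2 \<le> 0"
        using LA[OF y] low[of t x] t unfolding y_def by simp
      with lim show "\<exists>L\<le>0. ((\<lambda>h. (G (t+h) - G t)/h) \<longlongrightarrow> L) (at_right 0)" by blast
    qed simp
    then show ?thesis using Qre[of "T 1 x"] by (simp add: G_def T0)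
  qed
  have "closed {x. c0 * (norm x)\<^sup>2 \<le> Re (Q x x)}"
    by (intro closed_Collect_le continuous_intros B.continuous_on)
  then have "closure D \<subseteq> {x. c0 * (norm x)\<^sup>2 \<le> Re (Q x x)}"
    using onD by (intro closure_minimal) auto
  then have "c0 * (norm x)\<^sup>2 \<le> Re (Q x x)" for x using D_dense by blast
  then show ?thesis unfolding strongly_positive_def using c0 Qim by blast
qed

end




locale sgh = sgl +
  fixes ip :: "'a::banach \<Rightarrow> 'a \<Rightarrow> complex" and c C :: real
  assumes ip1: "\<And>x y z. ip (x+y) z = ip x z + ip y z"
    and ip2: "\<And>k x z. ip (cs k x) z = k * ip x z"
    and ip3: "\<And>x y. ip y x = cnj (ip x y)"
    and c: "c > 0" and C: "C \<ge> 0"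
    and ipn: "\<And>x. Im (ip x x) = 0 \<and> c * (norm x)\<^sup>2 \<le> Re (ip x x) \<and> Re (ip x x) \<le> C * (norm x)\<^sup>2"
begin

lemma ipB: "bounded_bilinear ip"
proof (rule ip_bilinear[OF cs ip1 ip2 ip3 _ C])
  show "Re (ip x x) \<le> C * (norm x)\<^sup>2" for x using ipn by blast
  show "0 \<le> Re (ip x x)" for x using ipn[of x] c
    by (smt (verit) mult_nonneg_nonneg zero_le_power2 less_imp_le)
qed

interpretation I: bounded_bilinear ip by (rule ipB)

definition "K = (SOME K. K > 0 \<and> (\<forall>a b. norm (ip a b) \<le> norm a * norm b * K))"

lemma K: "K > 0" "norm (ip a b) \<le> K * norm a * norm b"
proof -
  have "\<exists>K. K > 0 \<and> (\<forall>a b. norm (ip a b) \<le> norm a * norm b * K)" using I.pos_bounded by blast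
  then have "K > 0 \<and> (\<forall>a b. norm (ip a b) \<le> norm a * norm b * K)" unfolding K_def by (rule someI_ex)
  then show "K > 0" "norm (ip a b) \<le> K * norm a * norm b" by (auto simp: mult.commute mult.left_commute)
qed

definition g where "g x z s = ip (T s x) (T s z)"

lemma g_cont: "continuous_on {0..} (g x z)"
  unfolding g_def by (intro I.continuous_on T_cont)

lemma g_bound: assumes s: "s \<ge> 0"
  shows "norm (g x z s) \<le> K * M\<^sup>2 * norm x * norm z * exp (- (2*\<epsilon>) * s)"
proof -
  have "norm (g x z s) \<le> K * norm (T s x) * norm (T s z)" unfolding g_def by (rule K)
  also have "\<dots> \<le> K * (M * exp (- \<epsilon> * s) * norm x) * (M * exp (- \<epsilon> * s) * norm z)"
    using K(1) T_bound[OF s] M by (intro mult_mono mult_left_mono) auto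
  also have "\<dots> = K * M\<^sup>2 * norm x * norm z * (exp (- \<epsilon> * s) * exp (- \<epsilon> * s))"
    by (simp add: power2_eq_square algebra_simps)
  also have "exp (- \<epsilon> * s) * exp (- \<epsilon> * s) = exp (- (2*\<epsilon>) * s)"
    by (simp add: exp_add[symmetric])
  finally show ?thesis .
qed

lemma exp_int: "((\<lambda>s. K * M\<^sup>2 * norm x * norm z * exp (- (2*\<epsilon>) * s)) has_integral
     K * M\<^sup>2 * norm x * norm z / (2*\<epsilon>)) {0..}"
  using has_integral_mult_right[OF has_integral_exp_minus_to_infinity[of "2*\<epsilon>" 0], of "K * M\<^sup>2 * norm x * norm z"] eps
  by simp

lemma g_abs: "g x z absolutely_integrable_on {0..}"
proof (rule measurable_bounded_by_integrable_imp_absolutely_integrable)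
  show "g x z \<in> borel_measurable (lebesgue_on {0..})"
    by (rule continuous_imp_measurable_on_sets_lebesgue[OF g_cont]) auto
  show "(\<lambda>s. K * M\<^sup>2 * norm x * norm z * exp (- (2*\<epsilon>) * s)) integrable_on {0..}"
    using exp_int by blast
  show "norm (g x z s) \<le> K * M\<^sup>2 * norm x * norm z * exp (- (2*\<epsilon>) * s)" if "s \<in> {0..}" for s
    using g_bound that by auto
qed auto

lemma g_int: "g x z integrable_on {0..}"
  using set_lebesgue_integral_eq_integral(1)[OF g_abs] .

definition P where "P x z = integral {0..} (g x z)"

lemma P_bound: "norm (P x z) \<le> (K * M\<^sup>2 / (2*\<epsilon>)) * norm x * norm z"
proof -
  have "norm (P x z) \<le> integral {0..} (\<lambda>s. K * M\<^sup>2 * norm x * norm z * exp (- (2*\<epsilon>) * s))"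
    unfolding P_def using g_int exp_int g_bound by (intro integral_norm_bound_integral) blast+
  also have "\<dots> = K * M\<^sup>2 * norm x * norm z / (2*\<epsilon>)" using exp_int by (rule integral_unique)
  finally show ?thesis by simp
qed


lemma gx_int: "a \<ge> 0 \<Longrightarrow> g x z integrable_on {a..b}"
  by (intro integrable_continuous_real continuous_on_subset[OF g_cont]) auto

lemma integral_cong0: "(\<And>s. s \<ge> 0 \<Longrightarrow> f s = h s) \<Longrightarrow> integral {0..} f = integral {0..} h"
  by (rule integral_cong) auto

lemma P_add1: "P (x+y) z = P x z + P y z"
proof -
  have "P (x+y) z = integral {0..} (\<lambda>s. g x z s + g y z s)"
    unfolding P_def g_def by (rule integral_cong0) (simp add: linear_simps T_lin ip1)
  also have "\<dots> = P x z + P y z" unfolding P_def by (rule integral_add[OF g_int g_int])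
  finally show ?thesis .
qed

lemma P_add2: "P x (y+z) = P x y + P x z"
proof -
  have "P x (y+z) = integral {0..} (\<lambda>s. g x y s + g x z s)"
    unfolding P_def g_def by (rule integral_cong0) (simp add: linear_simps T_lin I.add_right)
  also have "\<dots> = P x y + P x z" unfolding P_def by (rule integral_add[OF g_int g_int])
  finally show ?thesis .
qed

lemma ip_cs2: "ip a (cs k b) = cnj k * ip a b"
proof -
  have "ip a (cs k b) = cnj (ip (cs k b) a)" by (rule ip3)
  also have "\<dots> = cnj (k * ip b a)" by (simp only: ip2)
  also have "\<dots> = cnj k * cnj (ip b a)" by simp
  also have "cnj (ip b a) = ip a b" using ip3[of a b] by simp
  finally show ?thesis .
qed

lemma ip_nonneg: "Re (ip u u) \<ge> 0"
proof -
  have "0 \<le> c * (norm u)\<^sup>2" using c by simp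
  then show ?thesis using ipn[of u] by linarith
qed

lemma P_cs1: "P (cs k x) z = k * P x z"
proof -
  have "P (cs k x) z = integral {0..} (\<lambda>s. k * g x z s)"
    unfolding P_def g_def by (rule integral_cong0) (simp add: T_cs ip2)
  also have "\<dots> = k * P x z" unfolding P_def
    by (rule integral_unique[OF has_integral_mult_right[OF integrable_integral[OF g_int]]])
  finally show ?thesis .
qed

lemma P_cs2: "P x (cs k z) = cnj k * P x z"
proof -
  have "P x (cs k z) = integral {0..} (\<lambda>s. cnj k * g x z s)"
    unfolding P_def g_def by (rule integral_cong0) (simp add: T_cs ip_cs2)
  also have "\<dots> = cnj k * P x z" unfolding P_def
    by (rule integral_unique[OF has_integral_mult_right[OF integrable_integral[OF g_int]]])
  finally show ?thesis .
qed

lemma P_Im: "Im (P x x) = 0"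
proof -
  have "Im (P x x) = integral {0..} (Im \<circ> g x x)" unfolding P_def
    by (rule integral_linear[symmetric, OF g_int bounded_linear_Im])
  also have "\<dots> = integral {0..} (\<lambda>s. 0::real)" by (simp add: o_def g_def ipn)
  finally show ?thesis by simp
qed

lemma P_Re: "Re (P x x) = integral {0..} (\<lambda>s. Re (g x x s))"
  unfolding P_def using integral_linear[symmetric, OF g_int bounded_linear_Re] by (simp add: o_def)

lemma P_Re_nonneg: "Re (P x x) \<ge> 0"
proof -
  have "(Re \<circ> g x x) integrable_on {0..}" by (rule integrable_linear[OF g_int bounded_linear_Re])
  then have "0 \<le> integral {0..} (\<lambda>s. Re (g x x s))"
    by (intro integral_nonneg) (auto simp: g_def o_def ip_nonneg)
  then show ?thesis using P_Re by simp
qed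

lemma P_key: assumes r: "r \<ge> 0"
  shows "P x x = integral {0..r} (g x x) + P (T r x) (T r x)"
proof -
  have eq: "integral {0..b} (g (T r x) (T r x)) = integral {0..r+b} (g x x) - integral {0..r} (g x x)"
    if b: "b \<ge> 0" for b
  proof -
    have "integral {0..b} (g (T r x) (T r x)) = integral {0..b} (\<lambda>s. g x x (s + r))"
      by (rule integral_cong) (use r in \<open>auto simp: g_def T_add\<close>)
    also have "\<dots> = integral {r..r+b} (g x x)"
    proof -
      have "(g x x has_integral integral {r..r+b} (g x x)) {r..r+b}"
        using r by (intro integrable_integral gx_int)
      from has_integral_shift_real_ivl[OF this, of r] show ?thesis by (simp add: integral_unique)
    qed
    also have "\<dots> = integral {0..r+b} (g x x) - integral {0..r} (g x x)"
      using Henstock_Kurzweil_Integration.integral_combine[where a=0 and c=r and b="r+b" and f="g x x"]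
        r b gx_int[of 0 x x "r+b"] by (simp add: eq_diff_eq add.commute)
    finally show ?thesis .
  qed
  have l1: "((\<lambda>b. integral {0..b} (g (T r x) (T r x))) \<longlongrightarrow> P (T r x) (T r x)) at_top"
    unfolding P_def by (rule tail_lim[OF g_abs])
  have "filterlim (\<lambda>b. r + b) at_top at_top"
    by (rule filterlim_tendsto_add_at_top[OF tendsto_const filterlim_ident])
  then have "((\<lambda>b. integral {0..r+b} (g x x)) \<longlongrightarrow> P x x) at_top"
    unfolding P_def by (rule filterlim_compose[OF tail_lim[OF g_abs]])
  then have "((\<lambda>b. integral {0..r+b} (g x x) - integral {0..r} (g x x)) \<longlongrightarrow> P x x - integral {0..r} (g x x)) at_top"
    by (intro tendsto_diff tendsto_const)
  moreover have "eventually (\<lambda>b. integral {0..r+b} (g x x) - integral {0..r} (g x x)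
      = integral {0..b} (g (T r x) (T r x))) at_top"
    using eq by (intro eventually_mono[OF eventually_ge_at_top[of 0]]) auto
  ultimately have "((\<lambda>b. integral {0..b} (g (T r x) (T r x))) \<longlongrightarrow> P x x - integral {0..r} (g x x)) at_top"
    by (simp add: tendsto_cong)
  from tendsto_unique[OF _ l1 this] show ?thesis by simp
qed


lemma P_bil: "bounded_bilinear P"
proof (rule sesq_bilinear[OF P_add1 P_add2])
  show "P (r *\<^sub>R x) z = r *\<^sub>R P x z" for r x z
    using P_cs1[of "complex_of_real r" x z] cs_real[OF cs] by (simp add: scaleR_conv_of_real)
  show "P x (r *\<^sub>R z) = r *\<^sub>R P x z" for r x z
    using P_cs2[of x "complex_of_real r" z] cs_real[OF cs] by (simp add: scaleR_conv_of_real)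
  show "norm (P x z) \<le> (K * M\<^sup>2 / (2*\<epsilon>)) * norm x * norm z" for x z by (rule P_bound)
qed

lemma P_diff: "(1/h) *\<^sub>R (P (T h y) (T h y) - P y y) = - ((1/h) *\<^sub>R (integral {0..0+h} (g y y) - integral {0..0} (g y y)))"
  if "h \<ge> 0" for h y
  using P_key[OF that, of y] by (simp add: scaleR_diff_right)

lemma P_lim: "((\<lambda>h. (1/h) *\<^sub>R (P (T h y) (T h y) - P y y)) \<longlongrightarrow> - ip y y) (at_right 0)"
proof -
  have "((\<lambda>h. - ((1/h) *\<^sub>R (integral {0..0+h} (g y y) - integral {0..0} (g y y)))) \<longlongrightarrow> - g y y 0) (at_right 0)"
    by (intro tendsto_minus dq_integral[OF g_cont]) simp
  moreover have "eventually (\<lambda>h. - ((1/h) *\<^sub>R (integral {0..0+h} (g y y) - integral {0..0} (g y y)))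
     = (1/h) *\<^sub>R (P (T h y) (T h y) - P y y)) (at_right 0)"
    by (rule eventually_mono[OF eventually_at_right_less]) (simp add: P_diff)
  ultimately show ?thesis by (simp add: tendsto_cong g_def T0)
qed

lemma P_deriv: assumes x: "x \<in> D" shows "P (A x) x + P x (A x) = - ip x x"
  using tendsto_unique[OF trivial_limit_at_right_real RD[OF P_bil x] P_lim] .

definition "Q0 = (\<lambda>x z. complex_of_real (1/c) * P x z)"

lemma Q0_L: "Q0 \<in> L_set cs D A"
proof -
  define KP where "KP = K * M\<^sup>2 / (2*\<epsilon>)"
  have Qb: "cmod (Q0 x z) \<le> (KP / c) * norm x * norm z" for x z
  proof -
    have "cmod (Q0 x z) = (1/c) * cmod (P x z)" using c by (simp add: Q0_def norm_mult norm_divide)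
    also have "\<dots> \<le> (1/c) * (KP * norm x * norm z)" using P_bound[of x z] c
      by (intro mult_left_mono) (auto simp: KP_def)
    finally show ?thesis by simp
  qed
  have baf: "bounded_antilinear_functional cs (Q0 x)" for x
    unfolding bounded_antilinear_functional_def
  proof (intro conjI allI exI)
    show "Q0 x (y + z) = Q0 x y + Q0 x z" for y z by (simp add: Q0_def P_add2 add_divide_distrib)
    show "Q0 x (cs k z) = cnj k * Q0 x z" for k z by (simp add: Q0_def P_cs2)
    show "cmod (Q0 x z) \<le> (KP / c * norm x) * norm z" for z using Qb[of x z] by simp
  qed
  have bod: "bounded_op_dual cs Q0"
    unfolding bounded_op_dual_def
  proof (intro conjI allI exI baf)
    show "Q0 (x + y) = (\<lambda>z. Q0 x z + Q0 y z)" for x y by (simp add: Q0_def P_add1 add_divide_distrib)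
    show "Q0 (cs k x) = (\<lambda>z. k * Q0 x z)" for k x by (simp add: Q0_def P_cs1)
    show "cmod (Q0 x z) \<le> (KP / c) * norm x * norm z" for x z by (rule Qb)
  qed
  have pos: "positive_op cs Q0"
    unfolding positive_op_def using bod P_Im P_Re_nonneg c by (simp add: Q0_def)
  have "Im (Q0 (A x) x + Q0 x (A x)) = 0 \<and> Re (Q0 (A x) x + Q0 x (A x)) \<le> - (norm x)\<^sup>2" if x: "x \<in> D" for x
  proof -
    have "Q0 (A x) x + Q0 x (A x) = complex_of_real (1/c) * (- ip x x)"
      unfolding Q0_def P_deriv[OF x, symmetric] by (simp add: algebra_simps)
    moreover have "(1/c) * (- Re (ip x x)) \<le> (1/c) * (- (c * (norm x)\<^sup>2))"
      using ipn[of x] c by (intro mult_left_mono) auto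
    ultimately show ?thesis using ipn[of x] c by simp
  qed
  then show ?thesis unfolding L_set_def using pos by blast
qed


lemma exp_quot: fixes l r :: real shows "((\<lambda>k. (exp (l * (r + k)) - exp (l * r)) / k) \<longlongrightarrow> l * exp (l * r)) (at_right 0)"
proof -
  have "((\<lambda>s. exp (l * s)) has_real_derivative exp (l * r) * l) (at r)"
    by (auto intro!: derivative_eq_intros)
  then have "((\<lambda>s. exp (l * s)) has_vector_derivative exp (l * r) * l) (at r within UNIV)"
    by (simp add: has_real_derivative_iff_has_vector_derivative)
  from conv_vd[OF this, of "r+1"] show ?thesis by (simp add: mult.commute divide_inverse)
qed

lemma sp_imp_li:
  assumes H: "\<forall>Q\<in>L_set cs D A. strongly_positive Q"
  shows "left_invertible_sg T"
proof -
  obtain \<theta> where th: "\<theta> > 0" and thb: "\<And>y. \<theta> * (norm y)\<^sup>2 \<le> Re (Q0 y y)"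
    using H Q0_L unfolding strongly_positive_def by blast
  define \<theta>' where "\<theta>' = c * \<theta>"
  have th': "\<theta>' > 0" using th c by (simp add: \<theta>'_def)
  have Pl: "\<theta>' * (norm y)\<^sup>2 \<le> Re (P y y)" for y
  proof -
    have "\<theta> * (norm y)\<^sup>2 \<le> Re (P y y) / c" using thb[of y] by (simp add: Q0_def)
    then show ?thesis using c by (simp add: \<theta>'_def field_simps)
  qed
  define KP where "KP = K * M\<^sup>2 / (2*\<epsilon>)"
  have KP: "KP > 0" using K(1) M eps by (simp add: KP_def)
  have Pu: "Re (P y y) \<le> KP * (norm y)\<^sup>2" for y
    using P_bound[of y y] complex_Re_le_cmod[of "P y y"] by (simp add: KP_def power2_eq_square mult.assoc)
  define l where "l = C / \<theta>'"
  have l: "l \<ge> 0" using C th' by (simp add: l_def)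
  define m where "m = (\<lambda>R. sqrt (\<theta>' * exp (- l * R) / KP))"
  show ?thesis unfolding left_invertible_sg_def
  proof (intro exI[of _ m] conjI allI impI)
    fix R :: real assume R: "R \<ge> 0"
    show "m R > 0" using th' KP by (simp add: m_def)
  next
    fix R :: real and x assume R: "R \<ge> 0"
    define h where "h = (\<lambda>r. Re (P (T r x) (T r x)))"
    define G where "G = (\<lambda>r. - (h r * exp (l * r)))"
    have hc: "continuous_on {0..R} h"
    proof -
      have "continuous_on {0..R} (\<lambda>t. T t x)" by (rule continuous_on_subset[OF T_cont]) auto
      then have "continuous_on {0..R} (\<lambda>t. P (T t x) (T t x))"
        by (intro bounded_bilinear.continuous_on[OF P_bil])
      then show ?thesis unfolding h_def by (intro continuous_intros)
    qed
    have "G R \<le> G 0"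
    proof (rule dini[where g=G and a=0 and b=R])
      show "continuous_on {0..R} G" unfolding G_def by (intro continuous_intros hc)
    next
      fix r :: real assume r: "0 \<le> r" "r < R"
      define y where "y = T r x"
      have hq: "((\<lambda>k. (h (r+k) - h r)/k) \<longlongrightarrow> - Re (ip y y)) (at_right 0)"
      proof -
        have a: "((\<lambda>k. Re ((1/k) *\<^sub>R (P (T k y) (T k y) - P y y))) \<longlongrightarrow> Re (- ip y y)) (at_right 0)"
          by (intro tendsto_Re P_lim)
        have b: "eventually (\<lambda>k. Re ((1/k) *\<^sub>R (P (T k y) (T k y) - P y y)) = (h (r+k) - h r)/k) (at_right 0)"
        proof (rule eventually_mono[OF eventually_at_right_less])
          fix k :: real assume k: "0 < k"
          have "T (r+k) x = T k y" unfolding y_def using T_add[of k r x] k r by (simp add: add.commute)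
          then show "Re ((1/k) *\<^sub>R (P (T k y) (T k y) - P y y)) = (h (r+k) - h r)/k"
            by (simp add: h_def y_def divide_inverse mult.commute)
        qed
        from Lim_transform_eventually[OF a b] show ?thesis by simp
      qed
      have rk: "((\<lambda>k. r + k) \<longlongrightarrow> r) (at_right 0)"
        using tendsto_add[OF tendsto_const[of r] tendsto_ident_at[of 0 "{0<..}"]] by simp
      have lim: "((\<lambda>k. - ((h (r+k) - h r)/k * exp (l * (r + k)) + h r * ((exp (l * (r + k)) - exp (l * r)) / k)))
          \<longlongrightarrow> - ((- Re (ip y y)) * exp (l * r) + h r * (l * exp (l * r)))) (at_right 0)"
        by (intro tendsto_minus tendsto_add tendsto_mult hq tendsto_const exp_quot tendsto_exp
            tendsto_mult rk)
      have eqq: "- ((h (r+k) - h r)/k * exp (l * (r + k)) + h r * ((exp (l * (r + k)) - exp (l * r)) / k))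
          = (G (r+k) - G r)/k" for k
        by (cases "k = 0") (simp_all add: G_def field_simps)
      have "Re (ip y y) \<le> l * h r"
      proof -
        have "Re (ip y y) \<le> C * (norm y)\<^sup>2" using ipn by blast
        also have "\<dots> = l * (\<theta>' * (norm y)\<^sup>2)" using th' by (simp add: l_def)
        also have "\<dots> \<le> l * h r" using Pl[of y] l by (intro mult_left_mono) (auto simp: h_def y_def)
        finally show ?thesis .
      qed
      then have "- ((- Re (ip y y)) * exp (l * r) + h r * (l * exp (l * r))) \<le> 0"
        by (simp add: algebra_simps mult_right_mono)
      then show "\<exists>L\<le>0. ((\<lambda>k. (G (r+k) - G r)/k) \<longlongrightarrow> L) (at_right 0)"
        using lim unfolding eqq by blast
    qed (use R in simp)
    then have h1: "h 0 \<le> h R * exp (l * R)" by (simp add: G_def)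
    have "\<theta>' * (norm x)\<^sup>2 \<le> h 0" using Pl[of x] by (simp add: h_def T0)
    also note h1
    also have "h R * exp (l * R) \<le> KP * (norm (T R x))\<^sup>2 * exp (l * R)"
      using Pu[of "T R x"] by (simp add: h_def)
    finally have "\<theta>' * (norm x)\<^sup>2 * exp (- l * R) \<le> KP * (norm (T R x))\<^sup>2 * exp (l * R) * exp (- l * R)"
      by (simp add: mult_right_mono)
    also have "\<dots> = KP * (norm (T R x))\<^sup>2" by (simp add: mult.assoc exp_add[symmetric])
    finally have "(m R * norm x)\<^sup>2 \<le> (norm (T R x))\<^sup>2"
      using KP th' by (simp add: m_def power_mult_distrib field_simps)
    then show "m R * norm x \<le> norm (T R x)" by (rule power2_le_imp_le) simp
  qed
qed

end


theorem theorem4p1: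
  fixes cs :: "complex \<Rightarrow> 'a::banach \<Rightarrow> 'a"
    and T :: "real \<Rightarrow> 'a \<Rightarrow> 'a" and D :: "'a set" and A :: "'a \<Rightarrow> 'a"
  assumes "complex_structure cs"
    and "hilbertian cs"
    and "C0_semigroup cs T"
    and "generator T D A"
    and "unif_exp_stable T"
  shows "left_invertible_sg T \<longleftrightarrow> (\<forall>Q\<in>L_set cs D A. strongly_positive Q)"
proof -
  obtain M \<epsilon> where Me: "M \<ge> 1" "\<epsilon> > 0" "\<forall>t\<ge>0. onorm (T t) \<le> M * exp (- \<epsilon> * t)"
    using assms(5) unfolding unif_exp_stable_def by blast
  interpret sgl cs T D A M \<epsilon>
    using assms(1,3,4) Me by unfold_locales auto
  obtain ip :: "'a \<Rightarrow> 'a \<Rightarrow> complex" and c C where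
    ip: "\<forall>x y z. ip (x + y) z = ip x z + ip y z" "\<forall>k x z. ip (cs k x) z = k * ip x z"
      "\<forall>x y. ip y x = cnj (ip x y)" and cC: "c > 0"
      "\<forall>x. Im (ip x x) = 0 \<and> c * (norm x)\<^sup>2 \<le> Re (ip x x) \<and> Re (ip x x) \<le> C * (norm x)\<^sup>2"
    using assms(2) unfolding hilbertian_def by blast
  have ipn: "Im (ip x x) = 0 \<and> c * (norm x)\<^sup>2 \<le> Re (ip x x) \<and> Re (ip x x) \<le> max C 0 * (norm x)\<^sup>2" for x
  proof -
    have "C * (norm x)\<^sup>2 \<le> max C 0 * (norm x)\<^sup>2" by (intro mult_right_mono) auto
    then show ?thesis using cC(2) by (meson order_trans)
  qed
  interpret sgh cs T D A M \<epsilon> ip c "max C 0"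
  proof unfold_locales
    show "ip (x + y) z = ip x z + ip y z" for x y z using ip(1) by blast
    show "ip (cs k x) z = k * ip x z" for k x z using ip(2) by blast
    show "ip y x = cnj (ip x y)" for x y using ip(3) by blast
    show "c > 0" by (rule cC(1))
    show "max C 0 \<ge> 0" by (rule max.cobounded2)
    show "Im (ip x x) = 0 \<and> c * (norm x)\<^sup>2 \<le> Re (ip x x) \<and> Re (ip x x) \<le> max C 0 * (norm x)\<^sup>2" for x
      by (rule ipn)
  qed
  show ?thesis using li_imp_sp sp_imp_li by blast
qed

end
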